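(* Let $G$ be a group, and on the set $G$ define $a*b=b^{-1}ab$ (the conjugation quandle $\mathrm{Conj}(G)$) and $a\circ b=ba^{-1}b$ (the core quandle $\mathrm{Core}(G)$). Then for all $a,b,c\in G$, $$(a\circ b)*c=(a*c)\circ(b*c).$$ Moreover, if $g^2$ lies in the center of $G$ for every $g\in G$, then for all $a,b,c\in G$, $$(a*b)\circ c=(a\circ c)*(b\circ c).$$ *)

theory Defs
  imports "HOL-Algebra.Group"
begin

definition conj_op :: "('a, 'b) monoid_scheme \<Rightarrow> 'a \<Rightarrow> 'a \<Rightarrow> 'a" where
  "conj_op G a b = inv\<^bsub>G\<^esub> b \<otimes>\<^bsub>G\<^esub> a \<otimes>\<^bsub>G\<^esub> b"

definition core_op :: "('a, 'b) monoid_scheme \<Rightarrow> 'a \<Rightarrow> 'a \<Rightarrow> 'a" where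
  "core_op G a b = b \<otimes>\<^bsub>G\<^esub> inv\<^bsub>G\<^esub> a \<otimes>\<^bsub>G\<^esub> b"

definition group_center :: "('a, 'b) monoid_scheme \<Rightarrow> 'a set" where
  "group_center G = {z \<in> carrier G. \<forall>x\<in>carrier G. z \<otimes>\<^bsub>G\<^esub> x = x \<otimes>\<^bsub>G\<^esub> z}"

end

theory Submission
  imports Defs
begin

lemma (in group) aux_rinv: "x \<in> carrier G \<Longrightarrow> y \<in> carrier G \<Longrightarrow> x \<otimes> (inv x \<otimes> y) = y"
  by (simp add: m_assoc[symmetric])
lemma (in group) aux_linv: "x \<in> carrier G \<Longrightarrow> y \<in> carrier G \<Longrightarrow> inv x \<otimes> (x \<otimes> y) = y"
  by (simp add: m_assoc[symmetric])

theorem proposition4p17: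
  fixes G (structure)
  assumes "group G"
  shows "(\<forall>a\<in>carrier G. \<forall>b\<in>carrier G. \<forall>c\<in>carrier G.
            conj_op G (core_op G a b) c = core_op G (conj_op G a c) (conj_op G b c))
       \<and> ((\<forall>g\<in>carrier G. g \<otimes> g \<in> group_center G) \<longrightarrow>
            (\<forall>a\<in>carrier G. \<forall>b\<in>carrier G. \<forall>c\<in>carrier G.
              core_op G (conj_op G a b) c = conj_op G (core_op G a c) (core_op G b c)))"
proof -
  interpret group G by fact
  have P1: "conj_op G (core_op G a b) c = core_op G (conj_op G a c) (conj_op G b c)"
    if "a \<in> carrier G" "b \<in> carrier G" "c \<in> carrier G" for a b c
    using that by (simp add: conj_op_def core_op_def m_assoc inv_mult_group aux_rinv aux_linv)
  have P2: "core_op G (conj_op G a b) c = conj_op G (core_op G a c) (core_op G b c)"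
    if Z: "\<forall>g\<in>carrier G. g \<otimes> g \<in> group_center G"
      and a: "a \<in> carrier G" and b: "b \<in> carrier G" and c: "c \<in> carrier G" for a b c
  proof -
    have cb: "\<And>x. x \<in> carrier G \<Longrightarrow> c \<otimes> (c \<otimes> x) = x \<otimes> (c \<otimes> c)"
      using Z c unfolding group_center_def by (auto simp: m_assoc[symmetric])
    have bb: "\<And>x. x \<in> carrier G \<Longrightarrow> b \<otimes> (b \<otimes> x) = x \<otimes> (b \<otimes> b)"
      using Z b unfolding group_center_def by (auto simp: m_assoc[symmetric])
    have "inv b \<otimes> (inv a \<otimes> b) = b \<otimes> (inv a \<otimes> inv b)"
    proof -
      have "b \<otimes> (b \<otimes> (inv b \<otimes> (inv a \<otimes> b))) = b \<otimes> (b \<otimes> (b \<otimes> (inv a \<otimes> inv b)))"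
      proof -
        have "b \<otimes> (b \<otimes> (b \<otimes> (inv a \<otimes> inv b))) = (b \<otimes> (inv a \<otimes> inv b)) \<otimes> (b \<otimes> b)"
          using a b by (intro bb) simp
        also have "\<dots> = b \<otimes> (inv a \<otimes> b)" using a b by (simp add: m_assoc aux_linv)
        finally show ?thesis using a b by (simp add: aux_rinv)
      qed
      thus ?thesis using a b by (simp only: Units_l_cancel Units_eq m_closed inv_closed)
    qed
    moreover
    define W where "W = b \<otimes> (inv a \<otimes> (inv b \<otimes> c))"
    have W: "W \<in> carrier G" using a b c by (simp add: W_def)
    have "inv c \<otimes> (b \<otimes> (inv a \<otimes> (c \<otimes> (c \<otimes> (inv b \<otimes> c))))) = c \<otimes> W"
    proof -
      have "c \<otimes> (c \<otimes> (inv b \<otimes> c)) = (inv b \<otimes> c) \<otimes> (c \<otimes> c)"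
        using b c by (intro cb) simp
      hence "inv c \<otimes> (b \<otimes> (inv a \<otimes> (c \<otimes> (c \<otimes> (inv b \<otimes> c))))) = inv c \<otimes> (W \<otimes> (c \<otimes> c))"
        using a b c by (simp add: W_def m_assoc)
      also have "W \<otimes> (c \<otimes> c) = c \<otimes> (c \<otimes> W)" using W by (simp add: cb)
      also have "inv c \<otimes> (c \<otimes> (c \<otimes> W)) = c \<otimes> W" using W c by (simp add: aux_linv)
      finally show ?thesis .
    qed
    ultimately show ?thesis using a b c
      by (simp add: conj_op_def core_op_def m_assoc inv_mult_group aux_rinv aux_linv W_def)
  qed
  show ?thesis using P1 P2 by blast
qed

end
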